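(* A finite group is pseudo-nilpotent if and only if it is nilpotent.
   Context: For a semigroup $S$, $S^1$ denotes $S$ with an identity adjoined (if $S$ has none). For $x,y\in S$ and $z_1,z_2,\ldots\in S^1$ define recursively $\lambda_0=x$, $\rho_0=y$, $\lambda_{n+1}=\lambda_n z_{n+1}\rho_n$, $\rho_{n+1}=\rho_n z_{n+1}\lambda_n$; write $\lambda_n(x,y,z_1,\ldots,z_n)$ and $\rho_n(x,y,z_1,\ldots,z_n)$. A semigroup $S$ is nilpotent (in the sense of Mal'cev) if there is a positive integer $n$ with $\lambda_n(a,b,c_1,\ldots,c_n)=\rho_n(a,b,c_1,\ldots,c_n)$ for all $a,b\in S$ and $c_1,\ldots,c_n\in S^1$ (for groups this coincides with the usual notion of nilpotency). $\langle X\rangle$ denotes the subsemigroup generated by $X$. The upper non-nilpotent graph $\mathcal{N}_S$ has vertex set $S$, with an edge between $x$ and $y$ iff $\langle x,y\rangle$ is not nilpotent. The empty set is regarded as an ideal; for an ideal $I$ of $S$, $S/I$ is the Rees factor semigroup, with $S/\emptyset=S$. A semigroup $S$ is pseudo-nilpotent if the following holds: whenever $x,y\in S$, $w_1,\ldots,w_m\in S^1$, $T$ is the subsemigroup generated by $x,y$ and those $w_i$ lying in $S$, $I$ is an ideal (possibly empty) of $T$, and $t<m$ are non-negative integers such that, writing $\lambda_k=\lambda_k(x,y,w_1,\ldots,w_k)$ and $\rho_k=\rho_k(x,y,w_1,\ldots,w_k)$, one has $\lambda_t\neq\rho_t$, $(\lambda_t,\rho_t)=(\lambda_m,\rho_m)$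 and $\lambda_m,\rho_m\notin I$, then for every $0\le i\le m$ there is an edge in $\mathcal{N}_{T/I}$ between (the images of) $\lambda_i$ and $\rho_i$. *)

theory Defs
  imports "HOL-Algebra.Group"
begin

text \<open>A semigroup is given by a carrier set S and a binary operation f.
  Elements of S^1 are represented as 'a option: None is the (adjoined) identity,
  Some s is s. Multiplying by None does nothing.\<close>

definition mult1 :: "('a \<Rightarrow> 'a \<Rightarrow> 'a) \<Rightarrow> 'a \<Rightarrow> 'a option \<Rightarrow> 'a" where
  "mult1 f x z = (case z of None \<Rightarrow> x | Some w \<Rightarrow> f x w)"

definition one_ext :: "'a set \<Rightarrow> 'a option set" where
  "one_ext S = insert None (Some ` S)"

fun lr :: "('a \<Rightarrow> 'a \<Rightarrow> 'a) \<Rightarrow> 'a \<Rightarrow> 'a \<Rightarrow> (nat \<Rightarrow> 'a option) \<Rightarrow> nat \<Rightarrow> 'a \<times> 'a" where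
  "lr f x y z 0 = (x, y)"
| "lr f x y z (Suc n) =
     (let (l, r) = lr f x y z n
      in (f (mult1 f l (z (Suc n))) r, f (mult1 f r (z (Suc n))) l))"

definition lam :: "('a \<Rightarrow> 'a \<Rightarrow> 'a) \<Rightarrow> 'a \<Rightarrow> 'a \<Rightarrow> (nat \<Rightarrow> 'a option) \<Rightarrow> nat \<Rightarrow> 'a" where
  "lam f x y z n = fst (lr f x y z n)"

definition rho :: "('a \<Rightarrow> 'a \<Rightarrow> 'a) \<Rightarrow> 'a \<Rightarrow> 'a \<Rightarrow> (nat \<Rightarrow> 'a option) \<Rightarrow> nat \<Rightarrow> 'a" where
  "rho f x y z n = snd (lr f x y z n)"

definition malcev_nilpotent :: "'a set \<Rightarrow> ('a \<Rightarrow> 'a \<Rightarrow> 'a) \<Rightarrow> bool" where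
  "malcev_nilpotent S f \<longleftrightarrow>
     (\<exists>n>0. \<forall>a\<in>S. \<forall>b\<in>S. \<forall>c. (\<forall>i\<in>{1..n}. c i \<in> one_ext S) \<longrightarrow>
        lam f a b c n = rho f a b c n)"

inductive_set gen :: "('a \<Rightarrow> 'a \<Rightarrow> 'a) \<Rightarrow> 'a set \<Rightarrow> 'a set" for f X where
  base: "x \<in> X \<Longrightarrow> x \<in> gen f X"
| mult: "a \<in> gen f X \<Longrightarrow> b \<in> gen f X \<Longrightarrow> f a b \<in> gen f X"

definition sg_ideal :: "('a \<Rightarrow> 'a \<Rightarrow> 'a) \<Rightarrow> 'a set \<Rightarrow> 'a set \<Rightarrow> bool" where
  "sg_ideal f T I \<longleftrightarrow> I \<subseteq> T \<and> (\<forall>a\<in>I. \<forall>t\<in>T. f a t \<in> I \<and> f t a \<in> I)"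

text \<open>Rees factor semigroup T/I on 'a option: Some a for a in T - I,
  None is the zero (present only when I is nonempty, so T/{} = T).\<close>
definition rees_carrier :: "'a set \<Rightarrow> 'a set \<Rightarrow> 'a option set" where
  "rees_carrier T I = Some ` (T - I) \<union> (if I = {} then {} else {None})"

fun rees_mult :: "('a \<Rightarrow> 'a \<Rightarrow> 'a) \<Rightarrow> 'a set \<Rightarrow> 'a option \<Rightarrow> 'a option \<Rightarrow> 'a option" where
  "rees_mult f I (Some a) (Some b) = (if f a b \<in> I then None else Some (f a b))"
| "rees_mult f I _ _ = None"

definition rees_img :: "'a set \<Rightarrow> 'a \<Rightarrow> 'a option" where
  "rees_img I x = (if x \<in> I then None else Some x)"

definition nn_edge :: "'a set \<Rightarrow> ('a \<Rightarrow> 'a \<Rightarrow> 'a) \<Rightarrow> 'a \<Rightarrow> 'a \<Rightarrow> bool" where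
  "nn_edge S f u v \<longleftrightarrow> u \<in> S \<and> v \<in> S \<and> \<not> malcev_nilpotent (gen f {u, v}) f"

definition pseudo_nilpotent :: "'a set \<Rightarrow> ('a \<Rightarrow> 'a \<Rightarrow> 'a) \<Rightarrow> bool" where
  "pseudo_nilpotent S f \<longleftrightarrow>
    (\<forall>x\<in>S. \<forall>y\<in>S. \<forall>m. \<forall>w. (\<forall>i\<in>{1..m}. w i \<in> one_ext S) \<longrightarrow>
      (let T = gen f ({x, y} \<union> {a. \<exists>i\<in>{1..m}. w i = Some a}) in
       \<forall>I t. sg_ideal f T I \<longrightarrow> t < m \<longrightarrow>
         lam f x y w t \<noteq> rho f x y w t \<longrightarrow>
         lam f x y w t = lam f x y w m \<longrightarrow> rho f x y w t = rho f x y w m \<longrightarrow>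
         lam f x y w m \<notin> I \<longrightarrow> rho f x y w m \<notin> I \<longrightarrow>
         (\<forall>i\<le>m. nn_edge (rees_carrier T I) (rees_mult f I)
                    (rees_img I (lam f x y w i)) (rees_img I (rho f x y w i)))))"

end

theory Submission
  imports Defs
begin

lemma lr_Suc_eq:
  "lr f x y z (Suc n) =
     (f (mult1 f (lam f x y z n) (z (Suc n))) (rho f x y z n),
      f (mult1 f (rho f x y z n) (z (Suc n))) (lam f x y z n))"
  by (simp add: lam_def rho_def split: prod.split)

lemma lam_Suc: "lam f x y z (Suc n) = f (mult1 f (lam f x y z n) (z (Suc n))) (rho f x y z n)"
  by (simp add: lam_def rho_def split: prod.split)

lemma rho_Suc: "rho f x y z (Suc n) = f (mult1 f (rho f x y z n) (z (Suc n))) (lam f x y z n)"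
  by (simp add: lam_def rho_def split: prod.split)

lemma propagate:
  "lam f x y z k = rho f x y z k \<Longrightarrow> lam f x y z (k+d) = rho f x y z (k+d)"
  by (induction d) (simp_all add: lam_Suc rho_Suc)

lemma propagate_le:
  "lam f x y z k = rho f x y z k \<Longrightarrow> k \<le> j \<Longrightarrow> lam f x y z j = rho f x y z j"
  using propagate[of f x y z k "j - k"] by simp

lemma lr_eq: "lr f x y z n = (lam f x y z n, rho f x y z n)"
  by (simp add: lam_def rho_def)

lemma periodic:
  fixes t m :: nat
  assumes tm: "t < m" and eq: "lr f x y w t = lr f x y w m"
  defines "q \<equiv> \<lambda>j. if j < m then j else t + (j - t) mod (m - t)"
  shows "lr f x y (\<lambda>j. w (Suc (q (j - 1)))) j = lr f x y w (q j)"
proof (induction j)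
  case 0
  then show ?case using tm by (simp add: q_def)
next
  case (Suc j)
  have key: "lr f x y w (Suc (q j)) = lr f x y w (q (Suc j))"
  proof (cases "Suc j < m")
    case True then show ?thesis by (simp add: q_def)
  next
    case False
    show ?thesis
    proof (cases "Suc j = m")
      case True
      then have "q j = j" "q (Suc j) = t" using tm by (auto simp: q_def)
      then show ?thesis using True eq by simp
    next
      case False2: False
      with False have jm: "j \<ge> m" by simp
      define P where "P = m - t"
      define r where "r = (j - t) mod P"
      have P0: "P > 0" using tm by (simp add: P_def)
      have rP: "r < P" using P0 by (simp add: r_def)
      have qj: "q j = t + r" using jm by (simp add: q_def r_def P_def)
      have sj: "Suc j - t = Suc (j - t)" using jm tm by simp
      have "(Suc j - t) mod P = (if Suc r = P then 0 else Suc r)"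
        using sj mod_Suc[of "j - t" P] by (simp add: r_def)
      then have qs: "q (Suc j) = (if Suc r = P then t else t + Suc r)"
        using jm by (simp add: q_def P_def)
      show ?thesis
      proof (cases "Suc r = P")
        case True
        then have "Suc (q j) = m" using qj tm by (simp add: P_def)
        then show ?thesis using qs True eq by simp
      next
        case False
        then show ?thesis using qs qj by simp
      qed
    qed
  qed
  have "lr f x y (\<lambda>j. w (Suc (q (j - 1)))) (Suc j) =
        (let (l, r) = lr f x y w (q j) in (f (mult1 f l (w (Suc (q j)))) r, f (mult1 f r (w (Suc (q j)))) l))"
    using Suc by simp
  also have "\<dots> = lr f x y w (Suc (q j))" by simp
  finally show ?case using key by simp
qed


definition cv :: "('a, 'b) monoid_scheme \<Rightarrow> 'a option \<Rightarrow> 'a" where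
  "cv G o' = (case o' of None \<Rightarrow> \<one>\<^bsub>G\<^esub> | Some g \<Rightarrow> g)"

context group
begin

lemma mult1_cv: "l \<in> carrier G \<Longrightarrow> o' \<in> one_ext (carrier G) \<Longrightarrow>
   mult1 (\<otimes>) l o' = l \<otimes> cv G o' \<and> cv G o' \<in> carrier G"
  by (auto simp: mult1_def cv_def one_ext_def)

lemma translate:
  assumes a: "a \<in> carrier G" and b: "b \<in> carrier G"
    and c: "\<forall>i\<in>{1..n}. c i \<in> one_ext (carrier G)"
  shows "k \<le> n \<Longrightarrow> lr (\<otimes>) (a \<otimes> inv b) \<one> (\<lambda>i. Some (b \<otimes> cv G (c i))) k =
      (lam (\<otimes>) a b c k \<otimes> inv b, rho (\<otimes>) a b c k \<otimes> inv b) \<and>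
      lam (\<otimes>) a b c k \<in> carrier G \<and> rho (\<otimes>) a b c k \<in> carrier G"
proof (induction k)
  case 0
  then show ?case using a b by (simp add: lam_def rho_def)
next
  case (Suc k)
  let ?l = "lam (\<otimes>) a b c k" and ?r = "rho (\<otimes>) a b c k"
  from Suc have IH: "lr (\<otimes>) (a \<otimes> inv b) \<one> (\<lambda>i. Some (b \<otimes> cv G (c i))) k = (?l \<otimes> inv b, ?r \<otimes> inv b)"
    and lc: "?l \<in> carrier G" and rc: "?r \<in> carrier G" by auto
  have ck: "c (Suc k) \<in> one_ext (carrier G)" using c Suc.prems by auto
  have m1: "mult1 (\<otimes>) ?l (c (Suc k)) = ?l \<otimes> cv G (c (Suc k))"
    and m2: "mult1 (\<otimes>) ?r (c (Suc k)) = ?r \<otimes> cv G (c (Suc k))"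
    and cvc: "cv G (c (Suc k)) \<in> carrier G"
    using mult1_cv[OF lc ck] mult1_cv[OF rc ck] by auto
  have cancel: "\<And>X. X \<in> carrier G \<Longrightarrow> inv b \<otimes> (b \<otimes> X) = X"
    using b by (simp add: m_assoc[symmetric])
  have L: "lam (\<otimes>) (a \<otimes> inv b) \<one> (\<lambda>i. Some (b \<otimes> cv G (c i))) k = ?l \<otimes> inv b"
    and R: "rho (\<otimes>) (a \<otimes> inv b) \<one> (\<lambda>i. Some (b \<otimes> cv G (c i))) k = ?r \<otimes> inv b"
    using IH by (simp_all add: lam_def rho_def)
  have m3: "mult1 (\<otimes>) (?l \<otimes> inv b) (Some (b \<otimes> cv G (c (Suc k)))) = ?l \<otimes> inv b \<otimes> (b \<otimes> cv G (c (Suc k)))"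
    and m4: "mult1 (\<otimes>) (?r \<otimes> inv b) (Some (b \<otimes> cv G (c (Suc k)))) = ?r \<otimes> inv b \<otimes> (b \<otimes> cv G (c (Suc k)))"
    by (simp_all add: mult1_def)
  show ?case
    unfolding lr_Suc_eq L R m3 m4 lam_Suc rho_Suc m1 m2
    using lc rc cvc b
    by (simp add: m_assoc cancel)
qed

lemma gen_pow:
  assumes x: "x \<in> carrier G"
  shows "u \<in> gen (rees_mult (\<otimes>) {}) {Some x, Some \<one>} \<Longrightarrow> \<exists>k::nat. u = Some (x [^] k)"
proof (induction rule: gen.induct)
  case (base u)
  then show ?case
  proof -
    have "Some x = Some (x [^] (1::nat))" using x by simp
    moreover have "Some \<one> = Some (x [^] (0::nat))" by simp
    ultimately show ?thesis using base by blast
  qed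
next
  case (mult a b)
  then obtain i j :: nat where "a = Some (x [^] i)" "b = Some (x [^] j)" by blast
  then show ?case using x by (auto simp: nat_pow_mult)
qed

lemma gen_pow_nilpotent:
  assumes x: "x \<in> carrier G"
  shows "malcev_nilpotent (gen (rees_mult (\<otimes>) {}) {Some x, Some \<one>}) (rees_mult (\<otimes>) {})"
  unfolding malcev_nilpotent_def
proof (intro exI[of _ 1] conjI allI ballI impI)
  fix a b and c :: "nat \<Rightarrow> 'a option option"
  assume aa: "a \<in> gen (rees_mult (\<otimes>) {}) {Some x, Some \<one>}"
    and bb: "b \<in> gen (rees_mult (\<otimes>) {}) {Some x, Some \<one>}"
    and cc: "\<forall>i\<in>{1..1}. c i \<in> one_ext (gen (rees_mult (\<otimes>) {}) {Some x, Some \<one>})"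
  obtain i j :: nat where ij: "a = Some (x [^] i)" "b = Some (x [^] j)"
    using gen_pow[OF x aa] gen_pow[OF x bb] by blast
  have "c 1 \<in> one_ext (gen (rees_mult (\<otimes>) {}) {Some x, Some \<one>})" using cc by (meson atLeastAtMost_iff order_refl)
  then have "c 1 = None \<or> (\<exists>k::nat. c 1 = Some (Some (x [^] k)))"
    using gen_pow[OF x] by (auto simp: one_ext_def)
  then show "lam (rees_mult (\<otimes>) {}) a b c 1 = rho (rees_mult (\<otimes>) {}) a b c 1"
    using ij x
    by (auto simp: lam_def rho_def mult1_def nat_pow_mult add.commute add.left_commute)
qed simp

end

lemma dir1:
  fixes G :: "('a, 'b) monoid_scheme" (structure)
  assumes "group G" and fin: "finite (carrier G)"
    and pn: "pseudo_nilpotent (carrier G) (\<lambda>x y. x \<otimes> y)"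
  shows "malcev_nilpotent (carrier G) (\<lambda>x y. x \<otimes> y)"
proof -
  interpret group G by fact
  define n where "n = card (carrier G \<times> carrier G)"
  have n0: "n > 0" using fin by (auto simp: n_def card_gt_0_iff)
  show ?thesis
    unfolding malcev_nilpotent_def
  proof (intro exI[of _ n] conjI n0 ballI allI impI)
    fix a b and c :: "nat \<Rightarrow> 'a option"
    assume a: "a \<in> carrier G" and b: "b \<in> carrier G"
      and c: "\<forall>i\<in>{1..n}. c i \<in> one_ext (carrier G)"
    show "lam (\<otimes>) a b c n = rho (\<otimes>) a b c n"
    proof (rule ccontr)
      assume ne: "lam (\<otimes>) a b c n \<noteq> rho (\<otimes>) a b c n"
      have neall: "lam (\<otimes>) a b c k \<noteq> rho (\<otimes>) a b c k" if "k \<le> n" for k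
        using propagate_le[of "(\<otimes>)" a b c k n] that ne by blast
      have incar: "lr (\<otimes>) a b c k \<in> carrier G \<times> carrier G" if "k \<le> n" for k
        using translate[OF a b c that] by (simp add: lr_eq)
      have "\<not> inj_on (lr (\<otimes>) a b c) {0..n}"
      proof
        assume "inj_on (lr (\<otimes>) a b c) {0..n}"
        moreover have "lr (\<otimes>) a b c ` {0..n} \<subseteq> carrier G \<times> carrier G"
          using incar by (simp add: image_subset_iff del: mem_Sigma_iff)
        moreover have "finite (carrier G \<times> carrier G)" using fin by simp
        ultimately have "card {0..n} \<le> card (carrier G \<times> carrier G)"
          by (rule card_inj_on_le)
        then show False by (simp add: n_def)
      qed
      then obtain t m where tm: "t \<le> n" "m \<le> n" "t \<noteq> m" "lr (\<otimes>) a b c t = lr (\<otimes>) a b c m"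
        unfolding inj_on_def by auto
      obtain t' m' where tm': "t' < m'" "m' \<le> n" "lr (\<otimes>) a b c t' = lr (\<otimes>) a b c m'"
      proof (cases "t < m")
        case True then show ?thesis using that tm by auto
      next
        case False then show ?thesis using that[of m t] tm by auto
      qed
      define x where "x = a \<otimes> inv b"
      define w where "w = (\<lambda>i. Some (b \<otimes> cv G (c i)))"
      have x: "x \<in> carrier G" using a b by (simp add: x_def)
      have tr: "lr (\<otimes>) x \<one> w k = (lam (\<otimes>) a b c k \<otimes> inv b, rho (\<otimes>) a b c k \<otimes> inv b)
          \<and> lam (\<otimes>) a b c k \<in> carrier G \<and> rho (\<otimes>) a b c k \<in> carrier G" if "k \<le> n" for k
        using translate[OF a b c that] by (simp add: x_def w_def)
      have w: "\<forall>i\<in>{1..m'}. w i \<in> one_ext (carrier G)"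
      proof
        fix i assume "i \<in> {1..m'}"
        then have "c i \<in> one_ext (carrier G)" using c tm' by auto
        then show "w i \<in> one_ext (carrier G)"
          using b by (auto simp: w_def one_ext_def cv_def)
      qed
      have ne': "lam (\<otimes>) x \<one> w t' \<noteq> rho (\<otimes>) x \<one> w t'"
        using tr[of t'] neall[of t'] tm' b by (auto simp: lr_eq)
      have eq': "lam (\<otimes>) x \<one> w t' = lam (\<otimes>) x \<one> w m'" "rho (\<otimes>) x \<one> w t' = rho (\<otimes>) x \<one> w m'"
        using tr[of t'] tr[of m'] tm' by (auto simp: lr_eq)
      have sg: "sg_ideal (\<otimes>) T {}" for T by (simp add: sg_ideal_def)
      have pn': "\<forall>I t. sg_ideal (\<otimes>) (gen (\<otimes>) ({x, \<one>} \<union> {a. \<exists>i\<in>{1..m'}. w i = Some a})) I \<longrightarrow> t < m' \<longrightarrow>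
         lam (\<otimes>) x \<one> w t \<noteq> rho (\<otimes>) x \<one> w t \<longrightarrow>
         lam (\<otimes>) x \<one> w t = lam (\<otimes>) x \<one> w m' \<longrightarrow> rho (\<otimes>) x \<one> w t = rho (\<otimes>) x \<one> w m' \<longrightarrow>
         lam (\<otimes>) x \<one> w m' \<notin> I \<longrightarrow> rho (\<otimes>) x \<one> w m' \<notin> I \<longrightarrow>
         (\<forall>i\<le>m'. nn_edge (rees_carrier (gen (\<otimes>) ({x, \<one>} \<union> {a. \<exists>i\<in>{1..m'}. w i = Some a})) I) (rees_mult (\<otimes>) I)
                    (rees_img I (lam (\<otimes>) x \<one> w i)) (rees_img I (rho (\<otimes>) x \<one> w i)))"
        using pn x w unfolding pseudo_nilpotent_def Let_def
        by (meson one_closed)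
      have "nn_edge (rees_carrier (gen (\<otimes>) ({x, \<one>} \<union> {a. \<exists>i\<in>{1..m'}. w i = Some a})) {})
             (rees_mult (\<otimes>) {}) (rees_img {} (lam (\<otimes>) x \<one> w 0)) (rees_img {} (rho (\<otimes>) x \<one> w 0))"
        using pn'[rule_format, OF sg tm'(1) ne' eq'] by simp
      then show False
        using gen_pow_nilpotent[OF x]
        by (simp add: nn_edge_def rees_img_def lam_def rho_def)
    qed
  qed
qed

lemma dir2:
  assumes mn: "malcev_nilpotent S f"
  shows "pseudo_nilpotent S f"
  unfolding pseudo_nilpotent_def Let_def
proof (intro ballI allI impI)
  fix x y :: 'a and m :: nat and w :: "nat \<Rightarrow> 'a option" and I :: "'a set" and t :: nat and i :: nat
  assume x: "x \<in> S" and y: "y \<in> S" and w: "\<forall>i\<in>{1..m}. w i \<in> one_ext S"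
    and "sg_ideal f (gen f ({x, y} \<union> {a. \<exists>i\<in>{1..m}. w i = Some a})) I"
    and tm: "t < m" and ne: "lam f x y w t \<noteq> rho f x y w t"
    and e1: "lam f x y w t = lam f x y w m" and e2: "rho f x y w t = rho f x y w m"
    and "lam f x y w m \<notin> I" and "rho f x y w m \<notin> I" and "i \<le> m"
  have eq: "lr f x y w t = lr f x y w m" using e1 e2 by (simp add: lr_eq)
  define q where "q \<equiv> \<lambda>j. if j < m then j else t + (j - t) mod (m - t)"
  define w' where "w' = (\<lambda>j. w (Suc (q (j - 1))))"
  have per: "lr f x y w' j = lr f x y w (q j)" for j
    unfolding w'_def q_def by (rule periodic[OF tm eq])
  have qlt: "q j < m" for j
  proof -
    have "(j - t) mod (m - t) < m - t" using tm by simp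
    then have "t + (j - t) mod (m - t) < m" using tm by linarith
    then show ?thesis by (simp add: q_def)
  qed
  have qge: "t \<le> j \<Longrightarrow> t \<le> q j" for j by (auto simp: q_def)
  have w': "\<forall>i\<in>{1..N}. w' i \<in> one_ext S" for N
    using w qlt by (auto simp: w'_def Suc_le_eq)
  obtain N where N: "N > 0" and nil: "\<forall>a\<in>S. \<forall>b\<in>S. \<forall>c. (\<forall>i\<in>{1..N}. c i \<in> one_ext S) \<longrightarrow>
        lam f a b c N = rho f a b c N"
    using mn unfolding malcev_nilpotent_def by blast
  have "lam f x y w' N = rho f x y w' N" using nil x y w' by blast
  then have "lam f x y w' (N + t) = rho f x y w' (N + t)" by (rule propagate)
  then have E: "lam f x y w (q (N + t)) = rho f x y w (q (N + t))"
  proof -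
    have "lam f x y w' (N+t) = lam f x y w (q (N + t))" "rho f x y w' (N+t) = rho f x y w (q (N + t))"
      using per[of "N+t"] by (simp_all add: lam_def rho_def)
    then show ?thesis using \<open>lam f x y w' (N + t) = rho f x y w' (N + t)\<close> by simp
  qed
  have "lam f x y w m = rho f x y w m"
    using propagate_le[OF E] qlt[of "N+t"] by simp
  with ne e1 e2 show "nn_edge (rees_carrier (gen f ({x, y} \<union> {a. \<exists>i\<in>{1..m}. w i = Some a})) I) (rees_mult f I)
                    (rees_img I (lam f x y w i)) (rees_img I (rho f x y w i))" by simp
qed

theorem lemma2p5:
  fixes G :: "('a, 'b) monoid_scheme" (structure)
  assumes "group G" and "finite (carrier G)"
  shows "pseudo_nilpotent (carrier G) (\<lambda>x y. x \<otimes> y) \<longleftrightarrow>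
         malcev_nilpotent (carrier G) (\<lambda>x y. x \<otimes> y)"
  using dir1[OF assms] dir2 by blast

end
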